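(* Let $n,k$ be positive integers with $n \geq 2k+1$, and let $TT_n$ be the transitive (acyclic) tournament on $n$ vertices. Then \[ \mathrm{sinv}_k(TT_n) = \mathrm{sinv}'_k(TT_n) = \begin{cases} 2 & \text{if } 2k+1 \leq n < 3k,\\ 1 & \text{if } 3k \leq n. \end{cases} \]
   Context: A tournament is an orientation of a complete graph; $TT_n$ denotes the unique (up to isomorphism) acyclic tournament on $n$ vertices. For a digraph $D$ and $X \subseteq V(D)$, inverting $X$ means reversing the direction of every arc of $D$ with both endvertices in $X$. A digraph $D$ is $k$-arc-strong if for every partition $(V_1,V_2)$ of $V(D)$ into nonempty sets there are at least $k$ arcs from $V_1$ to $V_2$; it is $k$-strong if $|V(D)|\ge k+1$ and $D-S$ is strongly connected for every $S\subseteq V(D)$ with $|S|<k$. $\mathrm{sinv}'_k(D)$ (resp. $\mathrm{sinv}_k(D)$) is the minimum number of sets whose successive inversion transforms $D$ into a $k$-arc-strong (resp. $k$-strong) digraph. *)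

theory Defs
  imports Main
begin

type_synonym 'a digraph = "'a set \<times> ('a \<times> 'a) set"

definition verts :: "'a digraph \<Rightarrow> 'a set" where "verts D = fst D"
definition arcs :: "'a digraph \<Rightarrow> ('a \<times> 'a) set" where "arcs D = snd D"

definition invert :: "'a digraph \<Rightarrow> 'a set \<Rightarrow> 'a digraph" where
  "invert D X = (verts D,
     {(u,v) \<in> arcs D. \<not> (u \<in> X \<and> v \<in> X)} \<union> {(v,u) | u v. (u,v) \<in> arcs D \<and> u \<in> X \<and> v \<in> X})"

definition invert_seq :: "'a digraph \<Rightarrow> 'a set list \<Rightarrow> 'a digraph" where
  "invert_seq D Xs = foldl invert D Xs"

definition k_arc_strong :: "nat \<Rightarrow> 'a digraph \<Rightarrow> bool" where
  "k_arc_strong k D \<longleftrightarrow>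
     (\<forall>V1 V2. V1 \<noteq> {} \<and> V2 \<noteq> {} \<and> V1 \<inter> V2 = {} \<and> V1 \<union> V2 = verts D \<longrightarrow>
        card {(u,v) \<in> arcs D. u \<in> V1 \<and> v \<in> V2} \<ge> k)"

definition strongly_connected_on :: "'a digraph \<Rightarrow> 'a set \<Rightarrow> bool" where
  "strongly_connected_on D W \<longleftrightarrow>
     (\<forall>u\<in>W. \<forall>v\<in>W. (u,v) \<in> ({(x,y) \<in> arcs D. x \<in> W \<and> y \<in> W})\<^sup>*)"

definition k_strong :: "nat \<Rightarrow> 'a digraph \<Rightarrow> bool" where
  "k_strong k D \<longleftrightarrow> card (verts D) \<ge> k + 1 \<and>
     (\<forall>S \<subseteq> verts D. card S < k \<longrightarrow> strongly_connected_on D (verts D - S))"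

definition sinv_arc :: "nat \<Rightarrow> 'a digraph \<Rightarrow> nat" where
  "sinv_arc k D = (LEAST p. \<exists>Xs. length Xs = p \<and> (\<forall>X\<in>set Xs. X \<subseteq> verts D) \<and>
                        k_arc_strong k (invert_seq D Xs))"

definition sinv :: "nat \<Rightarrow> 'a digraph \<Rightarrow> nat" where
  "sinv k D = (LEAST p. \<exists>Xs. length Xs = p \<and> (\<forall>X\<in>set Xs. X \<subseteq> verts D) \<and>
                        k_strong k (invert_seq D Xs))"

definition TT :: "nat \<Rightarrow> nat digraph" where
  "TT n = ({0..<n}, {(i,j). i < j \<and> j < n})"

end

theory Submission
  imports Defs
begin

lemma verts_invert[simp]: "verts (invert D X) = verts D"
  by (simp add: invert_def verts_def)

lemma verts_TT[simp]: "verts (TT n) = {0..<n}"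
  by (simp add: TT_def verts_def)

lemma arcs_inv_TT:
  "arcs (invert (TT n) X) = {(u,v). u<n \<and> v<n \<and> ((u<v \<and> \<not>(u\<in>X \<and> v\<in>X)) \<or> (v<u \<and> u\<in>X \<and> v\<in>X))}"
  by (auto simp: invert_def arcs_def verts_def TT_def)

lemma arcs_par:
  assumes "E = {i\<in>{0..<n}. even i}" "Od = {i\<in>{0..<n}. odd i}"
  shows "arcs (invert (invert (TT n) E) Od) =
     {(u,v). u<n \<and> v<n \<and> u\<noteq>v \<and> (if even u = even v then v<u else u<v)}"
  using assms by (auto simp: invert_def arcs_def verts_def TT_def)

lemma mul_ge: "(a::nat) \<ge> 1 \<Longrightarrow> b \<ge> 1 \<Longrightarrow> a*b + 1 \<ge> a + b"
  by (cases a; cases b) auto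

lemma strong_imp_arc:
  assumes ks: "k_strong k D" and k1: "k \<ge> 1"
  shows "k_arc_strong k D"
  unfolding k_arc_strong_def
proof (intro allI impI)
  fix V1 V2 assume h: "V1 \<noteq> {} \<and> V2 \<noteq> {} \<and> V1 \<inter> V2 = {} \<and> V1 \<union> V2 = verts D"
  have cv: "card (verts D) \<ge> k + 1" using ks by (simp add: k_strong_def)
  hence fin: "finite (verts D)" using k1 card.infinite by fastforce
  have f1: "finite V1" "finite V2" using h fin by (metis finite_Un)+
  define F where "F = {(u,v) \<in> arcs D. u \<in> V1 \<and> v \<in> V2}"
  have Fsub: "F \<subseteq> V1 \<times> V2" by (auto simp: F_def)
  have finF: "finite F" using Fsub f1 finite_subset by blast
  show "card {(u,v) \<in> arcs D. u \<in> V1 \<and> v \<in> V2} \<ge> k"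
  proof (rule ccontr)
    assume "\<not> ?thesis"
    hence cF: "card F < k" by (simp add: F_def)
    show False
    proof (cases "\<exists>x\<in>V1. \<exists>y\<in>V2. (x,y) \<notin> arcs D")
      case True
      then obtain x y where xy: "x\<in>V1" "y\<in>V2" "(x,y)\<notin>arcs D" by blast
      define S where "S = (\<lambda>(u,v). if u = x then v else u) ` F"
      have cS: "card S < k" using cF card_image_le[OF finF] S_def by (metis le_less_trans)
      have SV: "S \<subseteq> verts D"
      proof
        fix z assume "z \<in> S"
        then obtain a b where ab: "(a,b)\<in>F" "z = (if a = x then b else a)" unfolding S_def by auto
        then show "z \<in> verts D" using Fsub h by (cases "a = x") auto
      qed
      have xS: "x \<notin> S"
      proof
        assume "x \<in> S"
        then obtain a b where ab: "(a,b)\<in>F" "x = (if a = x then b else a)" unfolding S_def by auto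
        then show False using Fsub h xy by (cases "a = x") auto
      qed
      have yS: "y \<notin> S"
      proof
        assume "y \<in> S"
        then obtain a b where ab: "(a,b)\<in>F" "y = (if a = x then b else a)" unfolding S_def by auto
        then show False using Fsub h xy by (cases "a = x") (auto simp: F_def)
      qed
      have "strongly_connected_on D (verts D - S)" using ks cS SV by (simp add: k_strong_def)
      moreover have "x \<in> verts D - S" "y \<in> verts D - S" using xy h xS yS by auto
      ultimately have r: "(x,y) \<in> {(a,b) \<in> arcs D. a \<in> verts D - S \<and> b \<in> verts D - S}\<^sup>*"
        unfolding strongly_connected_on_def by blast
      have "\<forall>z. (x,z) \<in> {(a,b) \<in> arcs D. a \<in> verts D - S \<and> b \<in> verts D - S}\<^sup>* \<longrightarrow> z \<in> V1"
      proof (intro allI impI)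
        fix z assume "(x,z) \<in> {(a,b) \<in> arcs D. a \<in> verts D - S \<and> b \<in> verts D - S}\<^sup>*"
        then show "z \<in> V1"
        proof (induction rule: rtrancl_induct)
          case base then show ?case using xy by simp
        next
          case (step z w)
          have w: "w \<in> V1 \<union> V2" "w \<notin> S" "z \<notin> S" "(z,w) \<in> arcs D" using step h by auto
          show ?case
          proof (rule ccontr)
            assume "w \<notin> V1"
            hence "w \<in> V2" using w by auto
            hence "(z,w) \<in> F" using w step by (auto simp: F_def)
            hence "(\<lambda>(u,v). if u = x then v else u) (z,w) \<in> S" unfolding S_def by blast
            thus False using w by (auto split: if_splits)
          qed
        qed
      qed
      with r have "y \<in> V1" by blast
      thus False using xy h by auto
    next
      case False
      hence "F = V1 \<times> V2" using Fsub by (auto simp: F_def)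
      hence "card F = card V1 * card V2" by (simp add: card_cartesian_product)
      moreover have "card V1 + card V2 = card (verts D)" using h f1 by (metis card_Un_disjoint)
      moreover have "card V1 \<ge> 1" "card V2 \<ge> 1" using h f1 by (auto simp: Suc_le_eq card_gt_0_iff)
      ultimately have "card F + 1 \<ge> card (verts D)"
        using mul_ge[of "card V1" "card V2"] by linarith
      thus False using cF cv by linarith
    qed
  qed
qed


lemma pair1:
  assumes "finite S" "card S < n div 2"
  shows "\<exists>j. 2*j+1 < n \<and> 2*j \<notin> S \<and> 2*j+1 \<notin> S"
proof (rule ccontr)
  assume c: "\<not> ?thesis"
  define f where "f j = (if 2*j \<in> S then 2*j else 2*j+1)" for j :: nat
  have "inj_on f {..<n div 2}"
  proof (rule inj_onI)
    fix x y assume "f x = f y"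
    hence "f x div 2 = f y div 2" by simp
    moreover have "f x div 2 = x" "f y div 2 = y" by (auto simp: f_def)
    ultimately show "x = y" by simp
  qed
  moreover have "f ` {..<n div 2} \<subseteq> S"
  proof
    fix z assume "z \<in> f ` {..<n div 2}"
    then obtain j where j: "j < n div 2" "z = f j" by auto
    hence "2*j+1 < n" by linarith
    thus "z \<in> S" using c j by (auto simp: f_def)
  qed
  ultimately have "card {..<n div 2} \<le> card S" using card_inj_on_le assms(1) by blast
  thus False using assms by simp
qed

lemma pair2:
  assumes "finite S" "card S < (n - 1) div 2"
  shows "\<exists>j. 2*j+2 < n \<and> 2*j+1 \<notin> S \<and> 2*j+2 \<notin> S"
proof (rule ccontr)
  assume c: "\<not> ?thesis"
  define f where "f j = (if 2*j+1 \<in> S then 2*j+1 else 2*j+2)" for j :: nat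
  have "inj_on f {..<(n-1) div 2}"
  proof (rule inj_onI)
    fix x y assume "f x = f y"
    hence "(f x - 1) div 2 = (f y - 1) div 2" by simp
    moreover have "(f x - 1) div 2 = x" "(f y - 1) div 2 = y" by (auto simp: f_def)
    ultimately show "x = y" by simp
  qed
  moreover have "f ` {..<(n-1) div 2} \<subseteq> S"
  proof
    fix z assume "z \<in> f ` {..<(n-1) div 2}"
    then obtain j where j: "j < (n-1) div 2" "z = f j" by auto
    hence "2*j+2 < n" by linarith
    thus "z \<in> S" using c j by (auto simp: f_def)
  qed
  ultimately have "card {..<(n-1) div 2} \<le> card S" using card_inj_on_le assms(1) by blast
  thus False using assms by simp
qed

lemma par_strong:
  assumes k1: "k \<ge> 1" and n: "n \<ge> 2*k+1"
  shows "k_strong k (invert (invert (TT n) {i\<in>{0..<n}. even i}) {i\<in>{0..<n}. odd i})"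
    (is "k_strong k ?D")
proof -
  have A: "arcs ?D = {(u,v). u<n \<and> v<n \<and> u\<noteq>v \<and> (if even u = even v then v<u else u<v)}"
    by (rule arcs_par) auto
  have V: "verts ?D = {0..<n}" by simp
  show ?thesis unfolding k_strong_def strongly_connected_on_def
  proof (intro conjI allI impI ballI)
    show "card (verts ?D) \<ge> k+1" using n by simp
    fix S u v assume S: "S \<subseteq> verts ?D" "card S < k" and u: "u \<in> verts ?D - S" and v: "v \<in> verts ?D - S"
    define W where "W = {0..<n} - S"
    let ?R = "{(x,y) \<in> arcs ?D. x \<in> verts ?D - S \<and> y \<in> verts ?D - S}"
    have st: "(x,y) \<in> ?R\<^sup>*" if "x\<in>W" "y\<in>W" "x\<noteq>y" "if even x = even y then y<x else x<y" for x y
    proof -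
      have "(x,y) \<in> ?R" using that A by (auto simp: W_def)
      thus ?thesis by blast
    qed
    have fin: "finite S" using S(1) V finite_subset by auto
    have kd: "k \<le> n div 2" "k \<le> (n-1) div 2" using n by presburger+
    obtain j where j: "2*j+1<n" "2*j\<notin>S" "2*j+1\<notin>S" using pair1[OF fin, of n] S(2) kd by force
    obtain i where i: "2*i+2<n" "2*i+1\<notin>S" "2*i+2\<notin>S" using pair2[OF fin, of n] S(2) kd by force
    define e where "e = 2*j"
    define oo where "oo = 2*j+1"
    define p where "p = 2*i+1"
    define q where "q = 2*i+2"
    have W: "e \<in> W" "oo \<in> W" "p \<in> W" "q \<in> W" using i j by (auto simp: W_def e_def oo_def p_def q_def)
    have eo: "(e,oo) \<in> ?R\<^sup>*" using st W by (auto simp: e_def oo_def)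
    have pq: "(p,q) \<in> ?R\<^sup>*" using st W by (auto simp: p_def q_def)
    have to_o: "(x,oo) \<in> ?R\<^sup>*" if x: "x \<in> W" for x
    proof -
      have "x = oo \<or> (x \<noteq> oo \<and> (if even x = even oo then oo<x else x<oo)) \<or> x = e \<or>
            (x \<noteq> e \<and> (if even x = even e then e<x else x<e))"
        unfolding e_def oo_def by presburger
      then show ?thesis
      proof (elim disjE conjE)
        assume h: "x \<noteq> e" "if even x = even e then e<x else x<e"
        show ?thesis using rtrancl_trans[OF st[OF x W(1) h] eo] .
      next
        assume h: "x \<noteq> oo" "if even x = even oo then oo<x else x<oo"
        show ?thesis using st[OF x W(2) h] .
      next
        assume "x = e" then show ?thesis using eo by simp
      qed simp
    qed
    have from_e: "(e,y) \<in> ?R\<^sup>*" if y: "y \<in> W" for y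
    proof -
      have "y = e \<or> (y \<noteq> e \<and> (if even e = even y then y<e else e<y)) \<or> y = oo \<or>
            (y \<noteq> oo \<and> (if even oo = even y then y<oo else oo<y))"
        unfolding e_def oo_def by presburger
      then show ?thesis
      proof (elim disjE conjE)
        assume h: "y \<noteq> oo" "if even oo = even y then y<oo else oo<y"
        have ne: "oo \<noteq> y" using h by simp
        show ?thesis using rtrancl_trans[OF eo st[OF W(2) y ne h(2)]] .
      next
        assume h: "y \<noteq> e" "if even e = even y then y<e else e<y"
        have ne: "e \<noteq> y" using h by simp
        show ?thesis using st[OF W(1) y ne h(2)] .
      next
        assume "y = oo" then show ?thesis using eo by simp
      qed simp
    qed
    have from_p: "(p,y) \<in> ?R\<^sup>*" if y: "y \<in> W" for y
    proof -
      have "y = p \<or> (y \<noteq> p \<and> (if even p = even y then y<p else p<y)) \<or> y = q \<or>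
            (y \<noteq> q \<and> (if even q = even y then y<q else q<y))"
        unfolding p_def q_def by presburger
      then show ?thesis
      proof (elim disjE conjE)
        assume h: "y \<noteq> q" "if even q = even y then y<q else q<y"
        have ne: "q \<noteq> y" using h by simp
        show ?thesis using rtrancl_trans[OF pq st[OF W(4) y ne h(2)]] .
      next
        assume h: "y \<noteq> p" "if even p = even y then y<p else p<y"
        have ne: "p \<noteq> y" using h by simp
        show ?thesis using st[OF W(3) y ne h(2)] .
      next
        assume "y = q" then show ?thesis using pq by simp
      qed simp
    qed
    have o_mid: "(oo,e) \<in> ?R\<^sup>* \<or> (oo,p) \<in> ?R\<^sup>*"
    proof -
      have "oo = p \<or> (oo \<noteq> p \<and> p < oo) \<or> (oo \<noteq> q \<and> oo < q \<and> q \<noteq> e \<and> e < q)"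
        unfolding e_def oo_def p_def q_def by presburger
      moreover have "even oo = even p" "even oo \<noteq> even q" "even q = even e"
        unfolding e_def oo_def p_def q_def by presburger+
      ultimately show ?thesis
      proof (elim disjE conjE)
        assume "oo = p" then show ?thesis by simp
      next
        assume h: "oo \<noteq> p" "p < oo" and par: "even oo = even p"
        have "if even oo = even p then p<oo else oo<p" using h par by simp
        then show ?thesis using st[OF W(2) W(3) h(1)] by simp
      next
        assume h: "oo \<noteq> q" "oo < q" "q \<noteq> e" "e < q" and par: "even oo \<noteq> even q" "even q = even e"
        have "if even oo = even q then q<oo else oo<q" using h par by simp
        note a1 = st[OF W(2) W(4) h(1) this]
        have "if even q = even e then e<q else q<e" using h par by simp
        note a2 = st[OF W(4) W(1) h(3) this]
        show ?thesis using rtrancl_trans[OF a1 a2] by simp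
      qed
    qed
    have uW: "u \<in> W" "v \<in> W" using u v by (auto simp: W_def)
    show "(u,v) \<in> ?R\<^sup>*"
      using o_mid
    proof (elim disjE)
      assume h: "(oo,e) \<in> ?R\<^sup>*"
      show ?thesis using rtrancl_trans[OF rtrancl_trans[OF to_o[OF uW(1)] h] from_e[OF uW(2)]] .
    next
      assume h: "(oo,p) \<in> ?R\<^sup>*"
      show ?thesis using rtrancl_trans[OF rtrancl_trans[OF to_o[OF uW(1)] h] from_p[OF uW(2)]] .
    qed
  qed
qed


lemma not_sub_small:
  assumes "finite S" "card S < card B" "finite B"
  shows "\<exists>b\<in>B. b \<notin> S"
proof (rule ccontr)
  assume "\<not> ?thesis"
  hence "B \<subseteq> S" by blast
  from card_mono[OF assms(1) this] show False using assms(2) by linarith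
qed

lemma three_strong:
  assumes k1: "k \<ge> 1" and n: "n \<ge> 3*k"
  shows "k_strong k (invert (TT n) ({0..<k} \<union> {n-k..<n}))" (is "k_strong k ?D")
proof -
  let ?X = "{0..<k} \<union> {n-k..<n}"
  have A: "arcs ?D = {(u,v). u<n \<and> v<n \<and> ((u<v \<and> \<not>(u\<in>?X \<and> v\<in>?X)) \<or> (v<u \<and> u\<in>?X \<and> v\<in>?X))}"
    by (rule arcs_inv_TT)
  show ?thesis unfolding k_strong_def strongly_connected_on_def
  proof (intro conjI allI impI ballI)
    show "card (verts ?D) \<ge> k+1" using n k1 by simp
    fix S u v assume S: "S \<subseteq> verts ?D" "card S < k" and u: "u \<in> verts ?D - S" and v: "v \<in> verts ?D - S"
    define W where "W = {0..<n} - S"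
    define R where "R = {(x,y) \<in> arcs ?D. x \<in> verts ?D - S \<and> y \<in> verts ?D - S}"
    have st: "(x,y) \<in> R\<^sup>*" if "x\<in>W" "y\<in>W" "(x<y \<and> \<not>(x\<in>?X \<and> y\<in>?X)) \<or> (y<x \<and> x\<in>?X \<and> y\<in>?X)" for x y
    proof -
      have "(x,y) \<in> R" using that A by (auto simp: W_def R_def)
      thus ?thesis by blast
    qed
    have fin: "finite S" using S(1) finite_subset by auto
    obtain a where a: "a \<in> {0..<k}" "a \<notin> S" using not_sub_small[OF fin, of "{0..<k}"] S by auto
    have "card S < card {k..<n-k}" using S n by simp
    then obtain m where m: "m \<in> {k..<n-k}" "m \<notin> S" using not_sub_small[OF fin, of "{k..<n-k}"] by auto
    have "card S < card {n-k..<n}" using S n by simp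
    then obtain b where b: "b \<in> {n-k..<n}" "b \<notin> S" using not_sub_small[OF fin, of "{n-k..<n}"] by auto
    have W: "a \<in> W" "m \<in> W" "b \<in> W" using a m b n by (auto simp: W_def)
    have mb: "(m,b) \<in> R\<^sup>*" using st[OF W(2) W(3)] m b by auto
    have ba: "(b,a) \<in> R\<^sup>*" using st[OF W(3) W(1)] a b n by auto
    have am: "(a,m) \<in> R\<^sup>*" using st[OF W(1) W(2)] a m by auto
    have to_a: "(x,a) \<in> R\<^sup>*" if x: "x \<in> W" for x
    proof -
      have xn: "x < n" using x by (auto simp: W_def)
      consider "x < k" | "k \<le> x" "x < n-k" | "n - k \<le> x" by linarith
      then show ?thesis
      proof cases
        case 1
        then have "(x,m) \<in> R\<^sup>*" using st[OF x W(2)] m by auto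
        then show ?thesis by (rule rtrancl_trans[OF rtrancl_trans[OF _ mb] ba])
      next
        case 2
        then have "(x,b) \<in> R\<^sup>*" using st[OF x W(3)] b by auto
        then show ?thesis by (rule rtrancl_trans[OF _ ba])
      next
        case 3
        then show ?thesis using st[OF x W(1)] a xn n by auto
      qed
    qed
    have from_a: "(a,y) \<in> R\<^sup>*" if y: "y \<in> W" for y
    proof -
      have yn: "y < n" using y by (auto simp: W_def)
      consider "y < k" | "k \<le> y" "y < n-k" | "n - k \<le> y" by linarith
      then show ?thesis
      proof cases
        case 1
        then have "(b,y) \<in> R\<^sup>*" using st[OF W(3) y] b n by auto
        then show ?thesis by (rule rtrancl_trans[OF rtrancl_trans[OF am mb]])
      next
        case 2
        then show ?thesis using st[OF W(1) y] a by auto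
      next
        case 3
        then have "(m,y) \<in> R\<^sup>*" using st[OF W(2) y] m yn by auto
        then show ?thesis by (rule rtrancl_trans[OF am])
      qed
    qed
    have uW: "u \<in> W" "v \<in> W" using u v by (auto simp: W_def)
    show "(u,v) \<in> {(x,y) \<in> arcs ?D. x \<in> verts ?D - S \<and> y \<in> verts ?D - S}\<^sup>*"
      using rtrancl_trans[OF to_a[OF uW(1)] from_a[OF uW(2)]] unfolding R_def .
  qed
qed


lemma in_cut:
  assumes "k_arc_strong k D" "v \<in> verts D" "verts D - {v} \<noteq> {}"
  shows "card {(u,w) \<in> arcs D. u \<in> verts D - {v} \<and> w \<in> {v}} \<ge> k"
proof -
  have "verts D - {v} \<noteq> {} \<and> {v} \<noteq> {} \<and> (verts D - {v}) \<inter> {v} = {} \<and> (verts D - {v}) \<union> {v} = verts D"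
    using assms by auto
  from assms(1)[unfolded k_arc_strong_def, rule_format, OF this] show ?thesis .
qed

lemma out_cut:
  assumes "k_arc_strong k D" "v \<in> verts D" "verts D - {v} \<noteq> {}"
  shows "card {(u,w) \<in> arcs D. u \<in> {v} \<and> w \<in> verts D - {v}} \<ge> k"
proof -
  have "{v} \<noteq> {} \<and> verts D - {v} \<noteq> {} \<and> {v} \<inter> (verts D - {v}) = {} \<and> {v} \<union> (verts D - {v}) = verts D"
    using assms by auto
  from assms(1)[unfolded k_arc_strong_def, rule_format, OF this] show ?thesis .
qed

lemma lb0:
  assumes "k \<ge> 1" "n \<ge> 2"
  shows "\<not> k_arc_strong k (TT n)"
proof
  assume h: "k_arc_strong k (TT n)"
  have "1 \<in> verts (TT n) - {0}" using assms by auto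
  hence "verts (TT n) - {0} \<noteq> {}" by blast
  from in_cut[OF h _ this] assms
  have c: "card {(u,w) \<in> arcs (TT n). u \<in> verts (TT n) - {0} \<and> w \<in> {0::nat}} \<ge> k" by simp
  have E: "{(u,w) \<in> arcs (TT n). u \<in> verts (TT n) - {0} \<and> w \<in> {0::nat}} = {}"
    by (auto simp: TT_def arcs_def)
  have "card {(u,w) \<in> arcs (TT n). u \<in> verts (TT n) - {0} \<and> w \<in> {0::nat}} = 0"
    by (simp only: E card.empty)
  then show False using c assms by linarith
qed

lemma lb1:
  assumes k1: "k \<ge> 1" and n1: "n \<ge> 2*k+1" and n2: "n < 3*k"
  shows "\<not> k_arc_strong k (invert (TT n) X)"
proof
  assume h: "k_arc_strong k (invert (TT n) X)"
  let ?D = "invert (TT n) X"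
  have A: "arcs ?D = {(u,v). u<n \<and> v<n \<and> ((u<v \<and> \<not>(u\<in>X \<and> v\<in>X)) \<or> (v<u \<and> u\<in>X \<and> v\<in>X))}"
    by (rule arcs_inv_TT)
  have ne: "verts ?D - {v} \<noteq> {}" for v
  proof -
    have "(if v = 0 then 1 else 0) \<in> verts ?D - {v}" using n1 k1 by auto
    thus ?thesis by auto
  qed
  have low: "v \<in> X" if v: "v < k" for v
  proof (rule ccontr)
    assume vX: "v \<notin> X"
    define C where "C = {(u,w) \<in> arcs ?D. u \<in> verts ?D - {v} \<and> w \<in> {v}}"
    have vin: "v \<in> verts ?D" using v n1 by simp
    have c1: "card C \<ge> k" unfolding C_def using in_cut[OF h vin ne] .
    have sub: "C \<subseteq> {0..<v} \<times> {v}"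
    proof (rule subsetI)
      fix z assume "z \<in> C"
      then obtain u where z: "z = (u,v)" "(u,v) \<in> arcs ?D" unfolding C_def by blast
      have "(u,v) \<in> {(u,v). u<n \<and> v<n \<and> ((u<v \<and> \<not>(u\<in>X \<and> v\<in>X)) \<or> (v<u \<and> u\<in>X \<and> v\<in>X))}"
        using z(2) A by simp
      then have "u < v" using vX by blast
      thus "z \<in> {0..<v} \<times> {v}" using z by simp
    qed
    have "card C \<le> card ({0..<v} \<times> {v})" by (rule card_mono[OF _ sub]) simp
    moreover have "card ({0..<v} \<times> {v}) = v" by simp
    ultimately show False using c1 v by linarith
  qed
  have high: "v \<in> X" if v: "n - k \<le> v" "v < n" for v
  proof (rule ccontr)
    assume vX: "v \<notin> X"
    define C where "C = {(u,w) \<in> arcs ?D. u \<in> {v} \<and> w \<in> verts ?D - {v}}"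
    have vin: "v \<in> verts ?D" using v by simp
    have c1: "card C \<ge> k" unfolding C_def using out_cut[OF h vin ne] .
    have sub: "C \<subseteq> {v} \<times> {v+1..<n}"
    proof (rule subsetI)
      fix z assume "z \<in> C"
      then obtain w where z: "z = (v,w)" "(v,w) \<in> arcs ?D" unfolding C_def by blast
      have "(v,w) \<in> {(u,v). u<n \<and> v<n \<and> ((u<v \<and> \<not>(u\<in>X \<and> v\<in>X)) \<or> (v<u \<and> u\<in>X \<and> v\<in>X))}"
        using z(2) A by simp
      then have "v < w" "w < n" using vX by blast+
      thus "z \<in> {v} \<times> {v+1..<n}" using z by simp
    qed
    have "card C \<le> card ({v} \<times> {v+1..<n})" by (rule card_mono[OF _ sub]) simp
    moreover have "card ({v} \<times> {v+1..<n}) = n - (v+1)" by simp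
    ultimately show False using c1 v by linarith
  qed
  define C where "C = {(u,w) \<in> arcs ?D. u \<in> {0} \<and> w \<in> verts ?D - {0}}"
  have zin: "0 \<in> verts ?D" using n1 by simp
  have c1: "card C \<ge> k" unfolding C_def using out_cut[OF h zin ne] .
  have X0: "0 \<in> X" using low k1 by simp
  have sub: "C \<subseteq> {0} \<times> {k..<n-k}"
  proof (rule subsetI)
    fix z assume "z \<in> C"
    then obtain w where z: "z = (0,w)" "(0,w) \<in> arcs ?D" unfolding C_def by blast
    have "(0,w) \<in> {(u,v). u<n \<and> v<n \<and> ((u<v \<and> \<not>(u\<in>X \<and> v\<in>X)) \<or> (v<u \<and> u\<in>X \<and> v\<in>X))}"
      using z(2) A by simp
    then have wX: "w \<notin> X" "w < n" using X0 by auto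
    have "k \<le> w" using low wX not_le by blast
    moreover have "w < n - k" using high wX not_le by blast
    ultimately show "z \<in> {0} \<times> {k..<n-k}" using z by simp
  qed
  have "card C \<le> card ({0::nat} \<times> {k..<n-k})" by (rule card_mono[OF _ sub]) simp
  moreover have "card ({0::nat} \<times> {k..<n-k}) = n - k - k" by simp
  ultimately show False using c1 n2 by linarith
qed

theorem theorem5p9:
  fixes n k :: nat
  assumes "k \<ge> 1" and "n \<ge> 2 * k + 1"
  shows "sinv k (TT n) = sinv_arc k (TT n) \<and>
         sinv_arc k (TT n) = (if n < 3 * k then 2 else 1)"
proof -
  define L where "L = (if n < 3 * k then 2 else (1::nat))"
  have lb: "L \<le> length Xs" if "k_arc_strong k (invert_seq (TT n) Xs)" for Xs
  proof (cases Xs)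
    case Nil
    then show ?thesis using that lb0[of k n] assms by (simp add: invert_seq_def)
  next
    case (Cons X Ys)
    show ?thesis
    proof (cases Ys)
      case Nil
      then show ?thesis using that lb1[of k n X] assms Cons by (auto simp: invert_seq_def L_def)
    next
      case (Cons Y Zs)
      then show ?thesis using \<open>Xs = X # Ys\<close> by (simp add: L_def)
    qed
  qed
  have ub: "\<exists>Xs. length Xs = L \<and> (\<forall>X\<in>set Xs. X \<subseteq> verts (TT n)) \<and> k_strong k (invert_seq (TT n) Xs)"
  proof (cases "n < 3 * k")
    case True
    show ?thesis
      by (rule exI[of _ "[{i\<in>{0..<n}. even i}, {i\<in>{0..<n}. odd i}]"])
         (use True par_strong[OF assms] in \<open>auto simp: L_def invert_seq_def\<close>)
  next
    case False
    show ?thesis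
      by (rule exI[of _ "[{0..<k} \<union> {n-k..<n}]"])
         (use False three_strong[OF assms(1)] in \<open>auto simp: L_def invert_seq_def\<close>)
  qed
  have a: "sinv_arc k (TT n) = L"
    unfolding sinv_arc_def
  proof (rule Least_equality)
    show "\<exists>Xs. length Xs = L \<and> (\<forall>X\<in>set Xs. X \<subseteq> verts (TT n)) \<and> k_arc_strong k (invert_seq (TT n) Xs)"
      using ub strong_imp_arc assms(1) by blast
  next
    fix y assume "\<exists>Xs. length Xs = y \<and> (\<forall>X\<in>set Xs. X \<subseteq> verts (TT n)) \<and> k_arc_strong k (invert_seq (TT n) Xs)"
    then show "L \<le> y" using lb by blast
  qed
  have b: "sinv k (TT n) = L"
    unfolding sinv_def
  proof (rule Least_equality)
    show "\<exists>Xs. length Xs = L \<and> (\<forall>X\<in>set Xs. X \<subseteq> verts (TT n)) \<and> k_strong k (invert_seq (TT n) Xs)"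
      using ub by blast
  next
    fix y assume "\<exists>Xs. length Xs = y \<and> (\<forall>X\<in>set Xs. X \<subseteq> verts (TT n)) \<and> k_strong k (invert_seq (TT n) Xs)"
    then show "L \<le> y" using lb strong_imp_arc assms(1) by blast
  qed
  show ?thesis using a b by (simp add: L_def)
qed

end
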